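(* Let $p\ge 1$, let $\mathcal H$ be a finite set of hidden neurons with $H=|\mathcal H|$, and let $B\in\mathbb{R}^{p\times H}$ be the neuron/parameter incidence matrix described in the context. Let $g\in\mathbb{R}^p$ with $g_i>0$ for all $i$, and define $$F(u):=p\log\Big(\sum_{i=1}^p e^{(Bu)_i}g_i\Big)-\sum_{i=1}^p (Bu)_i,\qquad u\in\mathbb{R}^H.$$ Fix $u\in\mathbb{R}^H$ and a neuron $h$, and set $\rho_{i,h}:=e^{(Bu)_i-B_{ih}u_h}$ for $i=1,\dots,p$. Define $$\mathcal A:=|\mathrm{in}_h|-|\mathrm{out}_h|,\quad \mathcal B:=\sum_{i\in\mathrm{out}_h}\rho_{i,h}g_i,\quad \mathcal C:=\sum_{i\in\mathrm{in}_h}\rho_{i,h}g_i,\quad \mathcal D:=\sum_{i\in\mathrm{other}_h}\rho_{i,h}g_i.$$ Then the polynomial $\mathcal B(\mathcal A+p)X^2+\mathcal A\mathcal D X+\mathcal C(\mathcal A-p)$ has a unique positive root $r_h$, and the one-dimensional problem $\min_{u_h\in\mathbb{R}}F(u_1,\dots,u_h,\dots,u_H)$ (all other coordinates fixed) has a solution given by $u_h=\log(r_h)$.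
   Context: Let $\mathcal G=(V,E)$ be a finite directed acyclic graph. For $v\in V$, $\mathrm{ant}(v)=\{u:(u,v)\in E\}$, $\mathrm{suc}(v)=\{u:(v,u)\in E\}$. Input neurons are those with no antecedents, output neurons those with no successors, and hidden neurons $\mathcal H$ are the remaining ones. The parameter vector $\theta\in\mathbb{R}^p$ consists of one weight $\theta_{u\to v}$ per edge $(u,v)\in E$ and one bias $b_v$ per non-input neuron $v$, indexed in a fixed order. For a hidden neuron $h$: $\mathrm{in}_h$ is the set of indices of $b_h$ and of the weights $\theta_{u\to h}$, $u\in\mathrm{ant}(h)$; $\mathrm{out}_h$ is the set of indices of the weights $\theta_{h\to u}$, $u\in\mathrm{suc}(h)$; $\mathrm{other}_h=\{1,\dots,p\}\setminus(\mathrm{in}_h\cup\mathrm{out}_h)$. The matrix $B\in\mathbb{R}^{p\times H}$ has columns indexed by hidden neurons with $B_{ih}=-1$ if $i\in\mathrm{in}_h$, $B_{ih}=1$ if $i\in\mathrm{out}_h$, and $B_{ih}=0$ otherwise. (In the paper $g$ is the diagonal of $\partial\Phi(\theta)^\top\partial\Phi(\theta)$, with $\Phi$ the path-lifting, but the statement only uses $g>0$.) *)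

theory Defs
  imports Complex_Main "HOL-Computational_Algebra.Polynomial"
begin

text \<open>Network: finite DAG with vertex set V and edge set E.
  Parameters are indexed by Inl (u,v) (weight of edge (u,v)) and Inr v (bias of non-input neuron v).\<close>

definition ant :: "('v \<times> 'v) set \<Rightarrow> 'v \<Rightarrow> 'v set" where
  "ant E v = {u. (u, v) \<in> E}"

definition suc :: "('v \<times> 'v) set \<Rightarrow> 'v \<Rightarrow> 'v set" where
  "suc E v = {u. (v, u) \<in> E}"

definition dag :: "'v set \<Rightarrow> ('v \<times> 'v) set \<Rightarrow> bool" where
  "dag V E \<longleftrightarrow> finite V \<and> E \<subseteq> V \<times> V \<and> acyclic E"

definition hidden :: "'v set \<Rightarrow> ('v \<times> 'v) set \<Rightarrow> 'v set" where
  "hidden V E = {v \<in> V. ant E v \<noteq> {} \<and> suc E v \<noteq> {}}"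

definition params :: "'v set \<Rightarrow> ('v \<times> 'v) set \<Rightarrow> (('v \<times> 'v) + 'v) set" where
  "params V E = Inl ` E \<union> Inr ` {v \<in> V. ant E v \<noteq> {}}"

definition in_idx :: "('v \<times> 'v) set \<Rightarrow> 'v \<Rightarrow> (('v \<times> 'v) + 'v) set" where
  "in_idx E h = {Inr h} \<union> {Inl (u, h) | u. u \<in> ant E h}"

definition out_idx :: "('v \<times> 'v) set \<Rightarrow> 'v \<Rightarrow> (('v \<times> 'v) + 'v) set" where
  "out_idx E h = {Inl (h, u) | u. u \<in> suc E h}"

definition other_idx :: "'v set \<Rightarrow> ('v \<times> 'v) set \<Rightarrow> 'v \<Rightarrow> (('v \<times> 'v) + 'v) set" where
  "other_idx V E h = params V E - (in_idx E h \<union> out_idx E h)"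

definition Bmat :: "('v \<times> 'v) set \<Rightarrow> (('v \<times> 'v) + 'v) \<Rightarrow> 'v \<Rightarrow> real" where
  "Bmat E i h = (if i \<in> in_idx E h then -1 else if i \<in> out_idx E h then 1 else 0)"

definition Bu :: "'v set \<Rightarrow> ('v \<times> 'v) set \<Rightarrow> ('v \<Rightarrow> real) \<Rightarrow> (('v \<times> 'v) + 'v) \<Rightarrow> real" where
  "Bu V E u i = (\<Sum>h\<in>hidden V E. Bmat E i h * u h)"

definition Fobj :: "'v set \<Rightarrow> ('v \<times> 'v) set \<Rightarrow> ((('v \<times> 'v) + 'v) \<Rightarrow> real) \<Rightarrow> ('v \<Rightarrow> real) \<Rightarrow> real" where
  "Fobj V E g u = real (card (params V E)) * ln (\<Sum>i\<in>params V E. exp (Bu V E u i) * g i)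
                  - (\<Sum>i\<in>params V E. Bu V E u i)"

definition rho :: "'v set \<Rightarrow> ('v \<times> 'v) set \<Rightarrow> ('v \<Rightarrow> real) \<Rightarrow> 'v \<Rightarrow> (('v \<times> 'v) + 'v) \<Rightarrow> real" where
  "rho V E u h i = exp (Bu V E u i - Bmat E i h * u h)"

end

theory Submission imports Defs "HOL-Library.Quadratic_Discriminant" begin

lemma quad_sign:
  fixes a b c r x :: real
  assumes a: "a > 0" and c: "c < 0" and r: "r > 0" and q: "a*r^2 + b*r + c = 0" and x: "x > 0"
  shows "a*x^2 + b*x + c = (x - r) * (a*x + (a*r+b))" and "a*r + b > 0"
proof -
  show "a*x^2 + b*x + c = (x - r) * (a*x + (a*r+b))"
    using q by (simp add: power2_eq_square algebra_simps)
  have "r*(a*r+b) = -c" using q by (simp add: power2_eq_square algebra_simps)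
  then have "r*(a*r+b) > 0" using c by simp
  then show "a*r+b > 0" using r by (simp add: zero_less_mult_iff)
qed

lemma quad_root:
  fixes a b c :: real
  assumes a: "a > 0" and c: "c < 0"
  shows "\<exists>!r. r > 0 \<and> poly [: c, b, a :] r = 0"
proof -
  have pe: "poly [: c, b, a :] x = a*x^2 + b*x + c" for x
    by (simp add: power2_eq_square algebra_simps)
  have ac: "a * c < 0" using a c by (simp add: mult_pos_neg)
  have d: "discrim a b c > 0" using ac unfolding discrim_def
    using zero_le_power2[of b] by linarith
  define r where "r = (-b + sqrt (discrim a b c)) / (2 * a)"
  have root: "a*r^2 + b*r + c = 0" using discriminant_nonneg[of a b c r] a d r_def by auto
  have "sqrt (discrim a b c) > b"
  proof -
    have "discrim a b c > b^2" using ac unfolding discrim_def by linarith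
    then show ?thesis by (rule real_less_rsqrt)
  qed
  then have rpos: "r > 0" using a r_def by simp
  show ?thesis
  proof (rule ex1I[of _ r])
    show "r > 0 \<and> poly [: c, b, a :] r = 0" using rpos root pe by simp
  next
    fix s assume s: "s > 0 \<and> poly [:c, b, a:] s = 0"
    have "a*s^2 + b*s + c = 0" using s pe by metis
    then have "(s - r) * (a*s + (a*r+b)) = 0" using quad_sign(1)[OF a c rpos root, of s] s by simp
    moreover have "a*s + (a*r+b) > 0" using quad_sign(2)[OF a c rpos root, of s] s a mult_pos_pos[of a s] by linarith
    ultimately show "s = r" by simp
  qed
qed

lemma phi_min:
  fixes p A Bc C D r t :: real
  assumes Bc: "Bc > 0" and C: "C > 0" and D: "D \<ge> 0" and Ap: "A + p > 0" and Am: "A - p < 0"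
    and r: "r > 0" and q: "poly [: C*(A-p), A*D, Bc*(A+p) :] r = 0"
  shows "p*ln(Bc*exp (ln r) + C*exp(-(ln r)) + D) + A*(ln r) \<le> p*ln(Bc*exp t + C*exp(-t) + D) + A*t"
proof -
  define a where "a = Bc*(A+p)"
  define b where "b = A*D"
  define c where "c = C*(A-p)"
  have a: "a > 0" using Bc Ap a_def by simp
  have c: "c < 0" using C Am c_def by (simp add: mult_pos_neg)
  have root: "a*r^2 + b*r + c = 0" using q a_def b_def c_def by (simp add: power2_eq_square algebra_simps)
  define \<phi> where "\<phi> = (\<lambda>t. p*ln(Bc*exp t + C*exp(-t) + D) + A*t)"
  define den where "den = (\<lambda>t::real. Bc*exp t + C*exp(-t) + D)"
  have denpos: "den x > 0" for x
  proof -
    have "Bc*exp x > 0" "C*exp(-x) > 0" using Bc C by simp_all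
    then show ?thesis using D unfolding den_def by linarith
  qed
  have der: "DERIV \<phi> x :> (a*(exp x)^2 + b*exp x + c) / (exp x * den x)" for x
  proof -
    have "DERIV \<phi> x :> p * ((Bc*exp x - C*exp(-x)) / den x) + A"
      unfolding \<phi>_def
      apply (rule derivative_eq_intros refl | use denpos[of x] in \<open>simp add: den_def\<close>)+
      done
    moreover have "p * ((Bc*exp x - C*exp(-x)) / den x) + A = (a*(exp x)^2 + b*exp x + c) / (exp x * den x)"
    proof -
      define e where "e = exp x"
      have e: "e > 0" unfolding e_def by simp
      have dd: "Bc*e + C/e + D > 0" using denpos[of x] unfolding den_def e_def by (simp add: exp_minus field_simps)
      have "Bc*e + C/e + D = (Bc*e*e + C + D*e)/e" using e by (simp add: field_simps)
      with dd e have dd2: "Bc*e*e + C + D*e > 0" by (simp add: zero_less_divide_iff)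
      define N where "N = Bc*e*e + C + D*e"
      have N: "N > 0" using dd2 N_def by simp
      have h1: "e * (Bc*e + C/e + D) = N" using e unfolding N_def by (simp add: field_simps)
      have h2: "(Bc*e - C/e) / (Bc*e + C/e + D) = (Bc*e*e - C) / N"
      proof -
        have "(Bc*e - C/e) = (Bc*e*e - C)/e" using e by (simp add: field_simps)
        moreover have "(Bc*e + C/e + D) = N/e" using e unfolding N_def by (simp add: field_simps)
        ultimately show ?thesis using e N by simp
      qed
      have h3: "p * ((Bc*e*e - C) / N) + A = (p*(Bc*e*e - C) + A*N) / N" using N
        by (simp add: add_divide_distrib)
      have h4: "p*(Bc*e*e - C) + A*N = a*e^2 + b*e + c" unfolding a_def b_def c_def N_def
        by (simp add: power2_eq_square algebra_simps)
      have "p * ((Bc*e - C/e) / (Bc*e + C/e + D)) + A = (a*e^2 + b*e + c) / (e * (Bc*e + C/e + D))"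
        using h1 h2 h3 h4 by simp
      then show ?thesis unfolding den_def e_def by (simp add: exp_minus divide_inverse)
    qed
    ultimately show ?thesis by simp
  qed
  have sgn: "a*(exp x)^2 + b*exp x + c = (exp x - r) * (a*exp x + (a*r+b))" "a*r+b > 0" for x
    using quad_sign[OF a c r root, of "exp x"] by auto
  have lr: "exp (ln r) = r" using r by simp
  show ?thesis
  proof (cases "t \<le> ln r")
    case True
    have "\<phi> (ln r) \<le> \<phi> t"
    proof (rule DERIV_nonpos_imp_nonincreasing[OF True])
      fix x assume "t \<le> x" "x \<le> ln r"
      then have "exp x \<le> r" using r by (metis exp_le_cancel_iff lr)
      then have "a*(exp x)^2 + b*exp x + c \<le> 0" using sgn(1)[of x] sgn(2) a
        by (simp add: mult_nonpos_nonneg)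
      then show "\<exists>y. DERIV \<phi> x :> y \<and> y \<le> 0" using der[of x] denpos[of x]
        by (intro exI[of _ "(a*(exp x)^2 + b*exp x + c) / (exp x * den x)"]) (simp add: divide_nonpos_pos)
    qed
    then show ?thesis unfolding \<phi>_def .
  next
    case False
    have "\<phi> (ln r) \<le> \<phi> t"
    proof (rule DERIV_nonneg_imp_nondecreasing[of "ln r" t \<phi>])
      show "ln r \<le> t" using False by simp
      fix x assume "ln r \<le> x" "x \<le> t"
      then have "exp x \<ge> r" using r by (metis exp_le_cancel_iff lr)
      then have "a*(exp x)^2 + b*exp x + c \<ge> 0" using sgn(1)[of x] sgn(2) a
        by simp
      then show "\<exists>y. DERIV \<phi> x :> y \<and> y \<ge> 0" using der[of x] denpos[of x]
        by (intro exI[of _ "(a*(exp x)^2 + b*exp x + c) / (exp x * den x)"]) simp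
    qed
    then show ?thesis unfolding \<phi>_def .
  qed
qed


theorem lemma4p1:
  fixes V :: "'v set" and E :: "('v \<times> 'v) set"
    and g :: "(('v \<times> 'v) + 'v) \<Rightarrow> real" and u :: "'v \<Rightarrow> real" and h :: 'v
  assumes "dag V E"
    and "card (params V E) \<ge> 1"
    and "\<forall>i\<in>params V E. g i > 0"
    and "h \<in> hidden V E"
  defines "p \<equiv> real (card (params V E))"
    and "A \<equiv> real (card (in_idx E h)) - real (card (out_idx E h))"
    and "Bc \<equiv> (\<Sum>i\<in>out_idx E h. rho V E u h i * g i)"
    and "C \<equiv> (\<Sum>i\<in>in_idx E h. rho V E u h i * g i)"
    and "D \<equiv> (\<Sum>i\<in>other_idx V E h. rho V E u h i * g i)"
  shows "(\<exists>!r. r > 0 \<and> poly [: C * (A - p), A * D, Bc * (A + p) :] r = 0)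
       \<and> (\<forall>r. r > 0 \<and> poly [: C * (A - p), A * D, Bc * (A + p) :] r = 0 \<longrightarrow>
              (\<forall>t. Fobj V E g (u(h := ln r)) \<le> Fobj V E g (u(h := t))))"
proof -
  define P where "P = params V E"
  define I where "I = in_idx E h"
  define Ou where "Ou = out_idx E h"
  define Ot where "Ot = other_idx V E h"
  have finV: "finite V" and EV: "E \<subseteq> V \<times> V" and acy: "acyclic E" using assms(1) unfolding dag_def by auto
  have finE: "finite E" using finV EV by (meson finite_SigmaI finite_subset)
  have finP: "finite P" unfolding P_def params_def using finE finV by auto
  have finH: "finite (hidden V E)" using finV unfolding hidden_def by auto
  have hH: "h \<in> hidden V E" by fact
  then have hV: "h \<in> V" and antne: "ant E h \<noteq> {}" and sucne: "suc E h \<noteq> {}" unfolding hidden_def by auto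
  have IP: "I \<subseteq> P" unfolding I_def P_def in_idx_def params_def ant_def using hV antne by (auto simp: ant_def)
  have OP: "Ou \<subseteq> P" unfolding Ou_def P_def out_idx_def params_def suc_def by auto
  have hh: "(h, h) \<notin> E" using acy unfolding acyclic_def by auto
  have IO: "I \<inter> Ou = {}" unfolding I_def Ou_def in_idx_def out_idx_def ant_def suc_def using hh by auto
  have Ine: "I \<noteq> {}" unfolding I_def in_idx_def by auto
  have One: "Ou \<noteq> {}" using sucne unfolding Ou_def out_idx_def by auto
  have finI: "finite I" using IP finP finite_subset by blast
  have finO: "finite Ou" using OP finP finite_subset by blast
  have Ot_eq: "Ot = P - (I \<union> Ou)" unfolding Ot_def other_idx_def P_def I_def Ou_def by simp
  have split: "sum f P = sum f I + sum f Ou + sum f Ot" for f :: "_ \<Rightarrow> real"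
  proof -
    have "sum f P = sum f (P - (I \<union> Ou)) + sum f (I \<union> Ou)"
      using sum.subset_diff[of "I \<union> Ou" P f] IP OP finP by auto
    also have "sum f (I \<union> Ou) = sum f I + sum f Ou" using sum.union_disjoint[OF finI finO IO] .
    finally show ?thesis using Ot_eq by simp
  qed
  have BI: "Bmat E i h = -1" if "i \<in> I" for i using that unfolding Bmat_def I_def by simp
  have BO: "Bmat E i h = 1" if "i \<in> Ou" for i using that IO unfolding Bmat_def I_def Ou_def by auto
  have BOt: "Bmat E i h = 0" if "i \<in> Ot" for i using that unfolding Bmat_def I_def Ou_def Ot_eq by auto
  have shift: "Bu V E (u(h:=t)) i = Bu V E u i + Bmat E i h * (t - u h)" for t i
  proof -
    have r1: "Bu V E (u(h:=t)) i = Bmat E i h * (u(h:=t)) h + (\<Sum>h'\<in>hidden V E - {h}. Bmat E i h' * (u(h:=t)) h')"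
      unfolding Bu_def by (rule sum.remove[OF finH hH])
    have r2: "Bu V E u i = Bmat E i h * u h + (\<Sum>h'\<in>hidden V E - {h}. Bmat E i h' * u h')"
      unfolding Bu_def by (rule sum.remove[OF finH hH])
    have r3: "(\<Sum>h'\<in>hidden V E - {h}. Bmat E i h' * (u(h:=t)) h') = (\<Sum>h'\<in>hidden V E - {h}. Bmat E i h' * u h')"
      by (rule sum.cong) auto
    show ?thesis unfolding r1 r2 r3 by (simp add: algebra_simps)
  qed
  have term_eq: "exp (Bu V E (u(h:=t)) i) * g i = rho V E u h i * g i * exp (Bmat E i h * t)" for t i
    unfolding shift rho_def by (simp add: algebra_simps flip: exp_add)
  define S where "S = (\<Sum>i\<in>P. Bu V E u i)"
  have F: "Fobj V E g (u(h:=t)) = p * ln (Bc * exp t + C * exp (-t) + D) + A * t - (S + A * u h)" for t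
  proof -
    have e1: "(\<Sum>i\<in>P. exp (Bu V E (u(h:=t)) i) * g i) = Bc * exp t + C * exp (-t) + D"
    proof -
      have "(\<Sum>i\<in>P. exp (Bu V E (u(h:=t)) i) * g i) = (\<Sum>i\<in>P. rho V E u h i * g i * exp (Bmat E i h * t))"
        by (rule sum.cong[OF refl], rule term_eq)
      also have "\<dots> = (\<Sum>i\<in>I. rho V E u h i * g i * exp (Bmat E i h * t)) + (\<Sum>i\<in>Ou. rho V E u h i * g i * exp (Bmat E i h * t))
          + (\<Sum>i\<in>Ot. rho V E u h i * g i * exp (Bmat E i h * t))" by (rule split)
      also have "(\<Sum>i\<in>I. rho V E u h i * g i * exp (Bmat E i h * t)) = (\<Sum>i\<in>I. rho V E u h i * g i * exp (-t))"
        by (rule sum.cong) (auto simp: BI)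
      also have "(\<Sum>i\<in>Ou. rho V E u h i * g i * exp (Bmat E i h * t)) = (\<Sum>i\<in>Ou. rho V E u h i * g i * exp t)"
        by (rule sum.cong) (auto simp: BO)
      also have "(\<Sum>i\<in>Ot. rho V E u h i * g i * exp (Bmat E i h * t)) = (\<Sum>i\<in>Ot. rho V E u h i * g i)"
        by (rule sum.cong) (auto simp: BOt)
      finally have X: "(\<Sum>i\<in>P. exp (Bu V E (u(h:=t)) i) * g i) = (\<Sum>i\<in>I. rho V E u h i * g i * exp (-t)) + (\<Sum>i\<in>Ou. rho V E u h i * g i * exp t)
          + (\<Sum>i\<in>Ot. rho V E u h i * g i)" .
      show ?thesis using X unfolding Bc_def C_def D_def I_def Ou_def Ot_def sum_distrib_right[symmetric]
        by linarith
    qed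
    have e2: "(\<Sum>i\<in>P. Bu V E (u(h:=t)) i) = S - A * (t - u h)"
    proof -
      have "(\<Sum>i\<in>P. Bu V E (u(h:=t)) i) = S + (\<Sum>i\<in>P. Bmat E i h) * (t - u h)"
        unfolding shift S_def by (simp add: sum.distrib sum_distrib_right)
      also have "(\<Sum>i\<in>P. Bmat E i h) = (\<Sum>i\<in>I. Bmat E i h) + (\<Sum>i\<in>Ou. Bmat E i h) + (\<Sum>i\<in>Ot. Bmat E i h)"
        by (rule split)
      also have "\<dots> = real (card Ou) - real (card I)" using BI BO BOt by simp
      finally have X: "(\<Sum>i\<in>P. Bu V E (u(h:=t)) i) = S + (real (card Ou) - real (card I)) * (t - u h)" .
      show ?thesis unfolding X A_def I_def Ou_def by (simp add: algebra_simps)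
    qed
    show ?thesis unfolding Fobj_def e1 e2 p_def[symmetric] P_def[symmetric] by (simp add: algebra_simps p_def P_def)
  qed
  have gpos: "g i > 0" if "i \<in> P" for i using assms(3) that P_def by auto
  have Bc: "Bc > 0" unfolding Bc_def Ou_def[symmetric]
    using finO One OP gpos by (intro sum_pos) (auto simp: rho_def)
  have C: "C > 0" unfolding C_def I_def[symmetric]
    using finI Ine IP gpos by (intro sum_pos) (auto simp: rho_def)
  have D: "D \<ge> 0" unfolding D_def Ot_def[symmetric]
    using Ot_eq gpos by (intro sum_nonneg) (auto simp: rho_def intro: less_imp_le)
  have cardle: "card I + card Ou \<le> card P"
    using card_mono[OF finP, of "I \<union> Ou"] IP OP card_Un_disjoint[OF finI finO IO] by simp
  have cI: "card I \<ge> 1" using Ine finI by (simp add: Suc_le_eq card_gt_0_iff)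
  have cO: "card Ou \<ge> 1" using One finO by (simp add: Suc_le_eq card_gt_0_iff)
  have Ap: "A + p > 0" unfolding A_def p_def I_def[symmetric] Ou_def[symmetric] P_def[symmetric]
    using cardle cI by linarith
  have Am: "A - p < 0" unfolding A_def p_def I_def[symmetric] Ou_def[symmetric] P_def[symmetric]
    using cardle cO by linarith
  show ?thesis
  proof
    show "\<exists>!r. r > 0 \<and> poly [: C * (A - p), A * D, Bc * (A + p) :] r = 0"
      by (rule quad_root) (use Bc C Ap Am in \<open>auto simp: mult_pos_neg\<close>)
  next
    show "\<forall>r. r > 0 \<and> poly [: C * (A - p), A * D, Bc * (A + p) :] r = 0 \<longrightarrow>
              (\<forall>t. Fobj V E g (u(h := ln r)) \<le> Fobj V E g (u(h := t)))"
    proof (intro allI impI)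
      fix r t assume r: "r > 0 \<and> poly [: C * (A - p), A * D, Bc * (A + p) :] r = 0"
      show "Fobj V E g (u(h := ln r)) \<le> Fobj V E g (u(h := t))"
        unfolding F using phi_min[OF Bc C D Ap Am, of r t] r by simp
    qed
  qed
qed

end
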